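(* Let $G$ be a connected graph with $\gamma(G)\ge 2$. For any graph $H$, $$\mu_t(G\circ H)=n(G)\,(n(H)-1)+\mu_t(G).$$
   Context: All graphs are finite, simple and undirected; $n(G)$ denotes the order of $G$ and $\gamma(G)$ its domination number. The lexicographic product $G\circ H$ has vertex set $V(G)\times V(H)$, with $(x,y)$ adjacent to $(x',y')$ iff $xx'\in E(G)$, or $x=x'$ and $yy'\in E(H)$. Let $F$ be a connected graph and $X\subseteq V(F)$. Two vertices $x,y\in V(F)$ are $X$-visible if there exists a shortest $x,y$-path in $F$ none of whose internal vertices belongs to $X$. $X$ is a total mutual-visibility set of $F$ if every two vertices of $F$ are $X$-visible (the empty set is allowed). $\mu_t(F)$ is the maximum cardinality of a total mutual-visibility set of $F$. *)

theory Defs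
  imports Main
begin

definition graph :: "'a set \<Rightarrow> ('a \<Rightarrow> 'a \<Rightarrow> bool) \<Rightarrow> bool" where
  "graph V E \<longleftrightarrow> finite V \<and> V \<noteq> {} \<and>
     (\<forall>x y. E x y \<longrightarrow> x \<in> V \<and> y \<in> V) \<and>
     (\<forall>x y. E x y \<longrightarrow> E y x) \<and> (\<forall>x. \<not> E x x)"

definition walk :: "'a set \<Rightarrow> ('a \<Rightarrow> 'a \<Rightarrow> bool) \<Rightarrow> 'a list \<Rightarrow> bool" where
  "walk V E p \<longleftrightarrow> p \<noteq> [] \<and> set p \<subseteq> V \<and>
     (\<forall>i. Suc i < length p \<longrightarrow> E (p ! i) (p ! Suc i))"

definition connected_graph :: "'a set \<Rightarrow> ('a \<Rightarrow> 'a \<Rightarrow> bool) \<Rightarrow> bool" where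
  "connected_graph V E \<longleftrightarrow> graph V E \<and>
     (\<forall>x\<in>V. \<forall>y\<in>V. \<exists>p. walk V E p \<and> hd p = x \<and> last p = y)"

definition gdist :: "'a set \<Rightarrow> ('a \<Rightarrow> 'a \<Rightarrow> bool) \<Rightarrow> 'a \<Rightarrow> 'a \<Rightarrow> nat" where
  "gdist V E x y = (LEAST n. \<exists>p. walk V E p \<and> hd p = x \<and> last p = y \<and> length p = Suc n)"

definition shortest_path :: "'a set \<Rightarrow> ('a \<Rightarrow> 'a \<Rightarrow> bool) \<Rightarrow> 'a \<Rightarrow> 'a \<Rightarrow> 'a list \<Rightarrow> bool" where
  "shortest_path V E x y p \<longleftrightarrow> walk V E p \<and> hd p = x \<and> last p = y \<and>
     length p = Suc (gdist V E x y)"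

definition internal :: "'a list \<Rightarrow> 'a set" where
  "internal p = set (butlast (tl p))"

definition X_visible :: "'a set \<Rightarrow> ('a \<Rightarrow> 'a \<Rightarrow> bool) \<Rightarrow> 'a set \<Rightarrow> 'a \<Rightarrow> 'a \<Rightarrow> bool" where
  "X_visible V E X x y \<longleftrightarrow> (\<exists>p. shortest_path V E x y p \<and> internal p \<inter> X = {})"

definition total_mutual_visibility_set :: "'a set \<Rightarrow> ('a \<Rightarrow> 'a \<Rightarrow> bool) \<Rightarrow> 'a set \<Rightarrow> bool" where
  "total_mutual_visibility_set V E X \<longleftrightarrow> X \<subseteq> V \<and> (\<forall>x\<in>V. \<forall>y\<in>V. X_visible V E X x y)"

definition mu_t :: "'a set \<Rightarrow> ('a \<Rightarrow> 'a \<Rightarrow> bool) \<Rightarrow> nat" where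
  "mu_t V E = Max {card X | X. total_mutual_visibility_set V E X}"

definition dominating_set :: "'a set \<Rightarrow> ('a \<Rightarrow> 'a \<Rightarrow> bool) \<Rightarrow> 'a set \<Rightarrow> bool" where
  "dominating_set V E D \<longleftrightarrow> D \<subseteq> V \<and> (\<forall>v\<in>V. v \<in> D \<or> (\<exists>u\<in>D. E u v))"

definition domination_number :: "'a set \<Rightarrow> ('a \<Rightarrow> 'a \<Rightarrow> bool) \<Rightarrow> nat" where
  "domination_number V E = Min {card D | D. dominating_set V E D}"

definition lex_vertices :: "'a set \<Rightarrow> 'b set \<Rightarrow> ('a \<times> 'b) set" where
  "lex_vertices VG VH = VG \<times> VH"

definition lex_edges :: "('a \<Rightarrow> 'a \<Rightarrow> bool) \<Rightarrow> ('b \<Rightarrow> 'b \<Rightarrow> bool) \<Rightarrow> 'a \<times> 'b \<Rightarrow> 'a \<times> 'b \<Rightarrow> bool" where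
  "lex_edges EG EH u v \<longleftrightarrow> EG (fst u) (fst v) \<or> (fst u = fst v \<and> EH (snd u) (snd v))"

end

theory Submission
  imports Defs
begin

lemma walk_succ: "walk V E p \<longleftrightarrow> p \<noteq> [] \<and> set p \<subseteq> V \<and> successively E p"
  by (simp add: walk_def successively_conv_nth)

lemma gdist_le:
  assumes "walk V E p" "hd p = x" "last p = y"
  shows "Suc (gdist V E x y) \<le> length p"
proof -
  have "length p = Suc (length p - 1)" using assms(1) by (cases p) (auto simp: walk_def)
  then have "gdist V E x y \<le> length p - 1"
    unfolding gdist_def using assms by (intro Least_le) metis
  then show ?thesis using assms(1) by (cases p) (auto simp: walk_def)
qed

lemma gdist_ex:
  assumes "walk V E p" "hd p = x" "last p = y"
  shows "\<exists>q. shortest_path V E x y q"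
proof -
  have "\<exists>n. \<exists>p. walk V E p \<and> hd p = x \<and> last p = y \<and> length p = Suc n"
    using assms by (intro exI[of _ "length p - 1"] exI[of _ p]) (auto simp: walk_def)
  from LeastI_ex[OF this] show ?thesis unfolding shortest_path_def gdist_def by blast
qed

lemma shortest_of_len:
  assumes "walk V E p" "hd p = x" "last p = y" "length p \<le> Suc (gdist V E x y)"
  shows "shortest_path V E x y p"
  using gdist_le[OF assms(1-3)] assms unfolding shortest_path_def by simp

lemma gdist_ge1:
  assumes "walk V E p" "hd p = x" "last p = y" "x \<noteq> y"
  shows "gdist V E x y \<ge> 1"
proof (rule ccontr)
  assume "\<not> ?thesis"
  then have d: "gdist V E x y = 0" by simp
  obtain q where "shortest_path V E x y q" using gdist_ex[OF assms(1-3)] by blast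
  then have "length q = 1" "hd q = x" "last q = y" using d by (auto simp: shortest_path_def)
  then show False using assms(4) by (cases q) auto
qed

lemma gdist_ge2:
  assumes "walk V E p" "hd p = x" "last p = y" "x \<noteq> y" "\<not> E x y"
  shows "gdist V E x y \<ge> 2"
proof (rule ccontr)
  assume "\<not> ?thesis"
  then have d: "gdist V E x y = 1" using gdist_ge1[OF assms(1-4)] by simp
  obtain q where q: "shortest_path V E x y q" using gdist_ex[OF assms(1-3)] by blast
  then have "length q = 2" "hd q = x" "last q = y" "walk V E q" using d by (auto simp: shortest_path_def)
  then obtain a b where "q = [a,b]" by (cases q; cases "tl q") auto
  then show False using assms(5) \<open>walk V E q\<close> \<open>hd q = x\<close> \<open>last q = y\<close>
    by (auto simp: walk_def)
qed

lemma internal_map: "internal (map f p) = f ` internal p"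
  by (simp add: internal_def map_butlast[symmetric] map_tl[symmetric])

lemma internal_nth: "internal p = {p ! i | i. 0 < i \<and> Suc i < length p}"
proof -
  have "x \<in> set (butlast (tl p)) \<longleftrightarrow> (\<exists>i. x = p ! i \<and> 0 < i \<and> Suc i < length p)" for x
  proof
    assume "x \<in> set (butlast (tl p))"
    then obtain j where "j < length (butlast (tl p))" "x = butlast (tl p) ! j" by (metis in_set_conv_nth)
    then show "\<exists>i. x = p ! i \<and> 0 < i \<and> Suc i < length p"
      by (intro exI[of _ "Suc j"]) (auto simp: nth_butlast nth_tl)
  next
    assume "\<exists>i. x = p ! i \<and> 0 < i \<and> Suc i < length p"
    then obtain i where i: "x = p ! i" "0 < i" "Suc i < length p" by blast
    then have "butlast (tl p) ! (i - 1) = x" "i - 1 < length (butlast (tl p))"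
      by (auto simp: nth_butlast nth_tl)
    then show "x \<in> set (butlast (tl p))" by (metis nth_mem)
  qed
  then show ?thesis unfolding internal_def by blast
qed


lemma proj_walk:
  assumes "walk (VG \<times> VH) (lex_edges EG EH) p"
  shows "walk VG EG (remdups_adj (map fst p))"
proof -
  have p: "p \<noteq> []" "set p \<subseteq> VG \<times> VH" "successively (lex_edges EG EH) p"
    using assms by (auto simp: walk_succ)
  have "successively (\<lambda>a b. EG a b \<or> a = b) (map fst p)"
    unfolding successively_map using p(3)
    by (rule successively_mono) (auto simp: lex_edges_def)
  then have s1: "successively (\<lambda>a b. EG a b \<or> a = b) (remdups_adj (map fst p))"
    by (subst successively_remdups_adj_iff) auto
  have s2: "successively (\<noteq>) (remdups_adj (map fst p))"
    using distinct_adj_remdups_adj unfolding distinct_adj_def by blast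
  have "successively EG (remdups_adj (map fst p))"
    using s1 s2 unfolding successively_conv_nth by blast
  moreover have "set (remdups_adj (map fst p)) \<subseteq> VG" using p(2) by auto
  ultimately show ?thesis using p(1) by (simp add: walk_succ)
qed

lemma proj_shortest:
  assumes "walk (VG \<times> VH) (lex_edges EG EH) p" "hd p = x" "last p = y"
    "length p \<le> Suc (gdist VG EG (fst x) (fst y))"
  shows "shortest_path VG EG (fst x) (fst y) (map fst p)"
proof -
  let ?q = "remdups_adj (map fst p)"
  have ne: "p \<noteq> []" using assms(1) by (simp add: walk_def)
  have w: "walk VG EG ?q" by (rule proj_walk[OF assms(1)])
  have h: "hd ?q = fst x" "last ?q = fst y" using ne assms(2,3) by (auto simp: hd_map last_map)
  have "Suc (gdist VG EG (fst x) (fst y)) \<le> length ?q" using gdist_le[OF w h] .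
  moreover have "length ?q \<le> length (map fst p)" by (rule remdups_adj_length)
  ultimately have "length ?q = length (map fst p)" using assms(4) by simp
  then have "?q = map fst p" using distinct_adj_altdef distinct_adj_conv_length_remdups_adj by metis
  then have "walk VG EG (map fst p)" "hd (map fst p) = fst x" "last (map fst p) = fst y"
    using w h by metis+
  then show ?thesis using assms(4) shortest_of_len[of VG EG "map fst p"] by simp
qed

lemma lift:
  assumes "walk VG EG P" "hd P = g" "last P = g'" "g \<noteq> g'" "h \<in> VH" "h' \<in> VH" "h0 \<in> VH"
  defines "p \<equiv> map (\<lambda>i. (P!i, if i = 0 then h else if Suc i = length P then h' else h0)) [0..<length P]"
  shows "walk (VG \<times> VH) (lex_edges EG EH) p \<and> hd p = (g,h) \<and> last p = (g',h') \<and>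
     length p = length P \<and> map fst p = P \<and> (\<forall>i. 0 < i \<and> Suc i < length P \<longrightarrow> p!i = (P!i, h0))"
proof -
  have ne: "P \<noteq> []" using assms(1) by (simp add: walk_def)
  have len: "length P \<ge> 2"
  proof (rule ccontr)
    assume "\<not> ?thesis"
    with ne have "length P = 1" by (simp add: not_le less_2_cases_iff)
    then obtain a where "P = [a]" by (metis One_nat_def length_0_conv length_Suc_conv)
    then show False using assms(2-4) by simp
  qed
  have mf: "map fst p = P" unfolding p_def by (simp add: comp_def map_nth)
  have lp: "length p = length P" unfolding p_def by simp
  have hd: "hd p = (g,h)" unfolding p_def using ne assms(2) len by (simp add: hd_map hd_conv_nth)
  have lst: "last p = (g',h')" unfolding p_def using ne assms(3) len
    by (simp add: last_map last_conv_nth)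
  have nth: "\<forall>i. 0 < i \<and> Suc i < length P \<longrightarrow> p!i = (P!i, h0)" unfolding p_def by simp
  have "set p \<subseteq> VG \<times> VH"
  proof
    fix z assume "z \<in> set p"
    then obtain i where "i < length P" "z = p ! i" using lp by (metis in_set_conv_nth)
    then show "z \<in> VG \<times> VH" using assms(1,5-7) unfolding p_def walk_def
      by (auto dest: nth_mem)
  qed
  moreover have "\<forall>i. Suc i < length p \<longrightarrow> lex_edges EG EH (p!i) (p!Suc i)"
    using assms(1) unfolding walk_def lex_edges_def p_def by simp
  ultimately have "walk (VG \<times> VH) (lex_edges EG EH) p" using ne lp unfolding walk_def by auto
  then show ?thesis using mf lp hd lst nth by blast
qed

lemma prod_dist:
  assumes "walk VG EG P" "hd P = g" "last P = g'" "g \<noteq> g'" "h \<in> VH" "h' \<in> VH"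
  shows "gdist (VG \<times> VH) (lex_edges EG EH) (g,h) (g',h') = gdist VG EG g g'"
proof -
  obtain P' where P': "shortest_path VG EG g g' P'" using gdist_ex[OF assms(1-3)] by blast
  obtain p where p: "walk (VG \<times> VH) (lex_edges EG EH) p" "hd p = (g,h)" "last p = (g',h')"
    "length p = length P'"
    using lift[where P=P' and g=g and g'=g' and h=h and h'=h' and h0=h and VG=VG and EG=EG and VH=VH and EH=EH] P' assms(4-6) unfolding shortest_path_def by blast
  have 1: "Suc (gdist (VG \<times> VH) (lex_edges EG EH) (g,h) (g',h')) \<le> Suc (gdist VG EG g g')"
    using gdist_le[OF p(1-3)] p(4) P' unfolding shortest_path_def by simp
  obtain r where r: "shortest_path (VG \<times> VH) (lex_edges EG EH) (g,h) (g',h') r"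
    using gdist_ex[OF p(1-3)] by blast
  let ?q = "remdups_adj (map fst r)"
  have rw: "walk (VG \<times> VH) (lex_edges EG EH) r" "r \<noteq> []" using r by (auto simp: shortest_path_def walk_def)
  have "walk VG EG ?q" using proj_walk[OF rw(1)] .
  moreover have "hd ?q = g" "last ?q = g'" using r rw(2) by (auto simp: shortest_path_def hd_map last_map)
  ultimately have "Suc (gdist VG EG g g') \<le> length ?q" using gdist_le by metis
  also have "\<dots> \<le> length r" using remdups_adj_length[of "map fst r"] by simp
  finally show ?thesis using 1 r unfolding shortest_path_def by simp
qed


lemma conn_shortest:
  assumes "connected_graph V E" "x \<in> V" "y \<in> V"
  shows "\<exists>p. shortest_path V E x y p"
  using assms gdist_ex unfolding connected_graph_def by metis

lemma mu_fin:
  assumes "finite V"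
  shows "finite {card X | X. total_mutual_visibility_set V E X}"
proof -
  have "{card X | X. total_mutual_visibility_set V E X} \<subseteq> {..card V}"
    using assms by (auto simp: total_mutual_visibility_set_def intro: card_mono)
  then show ?thesis by (rule finite_subset) simp
qed

lemma tmv_card_le:
  assumes "finite V" "total_mutual_visibility_set V E X"
  shows "card X \<le> mu_t V E"
  unfolding mu_t_def using assms mu_fin[OF assms(1)] by (intro Max_ge) auto

lemma mu_attained:
  assumes "finite V" "total_mutual_visibility_set V E X0"
  shows "\<exists>X. total_mutual_visibility_set V E X \<and> card X = mu_t V E"
proof -
  have "mu_t V E \<in> {card X | X. total_mutual_visibility_set V E X}"
    unfolding mu_t_def using assms mu_fin[OF assms(1)] by (intro Max_in) auto
  then show ?thesis by auto
qed

lemma neighbor_outside: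
  assumes conn: "connected_graph VG EG" and dom: "domination_number VG EG \<ge> 2"
    and X: "total_mutual_visibility_set VG EG X" and g: "g \<in> VG"
  shows "\<exists>v\<in>VG. EG g v \<and> v \<notin> X"
proof -
  have fin: "finite VG" using conn by (simp add: connected_graph_def graph_def)
  have "\<exists>z\<in>VG. z \<noteq> g \<and> \<not> EG g z"
  proof (rule ccontr)
    assume "\<not> ?thesis"
    then have "dominating_set VG EG {g}" using g by (auto simp: dominating_set_def)
    moreover have "finite {card D | D. dominating_set VG EG D}"
    proof -
      have "{card D | D. dominating_set VG EG D} \<subseteq> card ` Pow VG"
        by (auto simp: dominating_set_def)
      then show ?thesis using fin by (meson finite_Pow_iff finite_imageI finite_subset)
    qed
    ultimately have "domination_number VG EG \<le> card {g}"
      unfolding domination_number_def by (intro Min_le) blast+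
    then show False using dom by simp
  qed
  then obtain z where z: "z \<in> VG" "z \<noteq> g" "\<not> EG g z" by blast
  obtain P where P: "shortest_path VG EG g z P" "internal P \<inter> X = {}"
    using X g z(1) unfolding total_mutual_visibility_set_def X_visible_def by blast
  have w: "walk VG EG P" "hd P = g" "last P = z" "length P = Suc (gdist VG EG g z)"
    using P(1) by (auto simp: shortest_path_def)
  have "gdist VG EG g z \<ge> 2" using gdist_ge2[OF w(1-3) z(2)[symmetric] z(3)] .
  then have len: "length P \<ge> 3" using w(4) by simp
  have "P ! 1 \<in> internal P" unfolding internal_nth using len by force
  moreover have "EG (P!0) (P!1)" using w(1) len unfolding walk_def by (metis One_nat_def Suc_le_eq numeral_3_eq_3 Suc_leD)
  moreover have "P!0 = g" using w(1,2) by (simp add: hd_conv_nth walk_def)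
  moreover have "P!1 \<in> VG" using w(1) len unfolding walk_def by (metis nth_mem order_trans subsetD Suc_le_eq numeral_3_eq_3 One_nat_def Suc_leD le_refl)
  ultimately show ?thesis using P(2) by blast
qed


theorem theorem4p3:
  fixes VG :: "'a set" and EG :: "'a \<Rightarrow> 'a \<Rightarrow> bool"
    and VH :: "'b set" and EH :: "'b \<Rightarrow> 'b \<Rightarrow> bool"
  assumes "connected_graph VG EG"
    and "domination_number VG EG \<ge> 2"
    and "graph VH EH"
  shows "mu_t (lex_vertices VG VH) (lex_edges EG EH)
           = card VG * (card VH - 1) + mu_t VG EG"
proof -
  note conn = assms(1) and dom = assms(2)
  let ?E = "lex_edges EG EH"
  have gG: "graph VG EG" using conn by (simp add: connected_graph_def)
  have fG: "finite VG" "VG \<noteq> {}" "\<And>x y. EG x y \<Longrightarrow> EG y x" "\<And>x. \<not> EG x x"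
    using gG by (auto simp: graph_def)
  have fH: "finite VH" "VH \<noteq> {}" "\<And>x. \<not> EH x x"
    using assms(3) by (auto simp: graph_def)
  have fP: "finite (VG \<times> VH)" using fG fH by simp
  have tmv0: "total_mutual_visibility_set VG EG {}"
    using conn_shortest[OF conn] unfolding total_mutual_visibility_set_def X_visible_def by blast
  obtain X0 where X0: "total_mutual_visibility_set VG EG X0" "card X0 = mu_t VG EG"
    using mu_attained[OF fG(1) tmv0] by blast
  have X0V: "X0 \<subseteq> VG" using X0 by (simp add: total_mutual_visibility_set_def)
  obtain h0 where h0: "h0 \<in> VH" using fH(2) by blast
  define S0 where "S0 = VG \<times> (VH - {h0}) \<union> X0 \<times> {h0}"
  have S0tmv: "total_mutual_visibility_set (VG \<times> VH) ?E S0"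
    unfolding total_mutual_visibility_set_def
  proof (intro conjI ballI)
    show "S0 \<subseteq> VG \<times> VH" using X0V h0 unfolding S0_def by auto
  next
    fix x y assume xV: "x \<in> VG \<times> VH" and yV: "y \<in> VG \<times> VH"
    obtain g h where x: "x = (g,h)" "g \<in> VG" "h \<in> VH" using xV by auto
    obtain g' h' where y: "y = (g',h')" "g' \<in> VG" "h' \<in> VH" using yV by auto
    show "X_visible (VG \<times> VH) ?E S0 x y"
    proof (cases "g = g'")
      case False
      obtain P where P: "shortest_path VG EG g g' P" "internal P \<inter> X0 = {}"
        using X0(1) x y unfolding total_mutual_visibility_set_def X_visible_def by blast
      have Pw: "walk VG EG P" "hd P = g" "last P = g'" "length P = Suc (gdist VG EG g g')"
        using P(1) by (auto simp: shortest_path_def)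
      obtain p where p: "walk (VG \<times> VH) ?E p" "hd p = (g,h)" "last p = (g',h')"
        "length p = length P" "\<forall>i. 0 < i \<and> Suc i < length P \<longrightarrow> p!i = (P!i, h0)"
        using lift[where P=P and g=g and g'=g' and h=h and h'=h' and h0=h0 and VG=VG and EG=EG
            and VH=VH and EH=EH] Pw(1-3) False x y h0 by blast
      have "gdist (VG \<times> VH) ?E (g,h) (g',h') = gdist VG EG g g'"
        using prod_dist[OF Pw(1-3) False x(3) y(3)] .
      then have sp: "shortest_path (VG \<times> VH) ?E (g,h) (g',h') p"
        using p Pw(4) by (intro shortest_of_len) auto
      have "internal p \<inter> S0 = {}"
      proof -
        { fix i assume i: "0 < i" "Suc i < length p"
          then have "P!i \<in> internal P" using p(4) unfolding internal_nth by auto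
          then have "P!i \<notin> X0" using P(2) by blast
          then have "p!i \<notin> S0" using p(4,5) i unfolding S0_def by auto }
        then show ?thesis unfolding internal_nth by blast
      qed
      then show ?thesis using sp x y unfolding X_visible_def by blast
    next
      case True
      show ?thesis
      proof (cases "h = h'")
        case True
        have w: "walk (VG \<times> VH) ?E [x]" using xV by (simp add: walk_def)
        have "shortest_path (VG \<times> VH) ?E x y [x]"
          using \<open>g = g'\<close> True x y by (intro shortest_of_len[OF w]) auto
        then show ?thesis unfolding X_visible_def internal_def by auto
      next
        case hne: False
        show ?thesis
        proof (cases "EH h h'")
          case True
          have w: "walk (VG \<times> VH) ?E [x,y]" using xV yV x y True \<open>g = g'\<close>
            by (auto simp: walk_def lex_edges_def nth_Cons split: nat.splits)
          have "gdist (VG \<times> VH) ?E x y \<ge> 1"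
            using gdist_ge1[OF w] x y hne by auto
          then have "shortest_path (VG \<times> VH) ?E x y [x,y]"
            by (intro shortest_of_len[OF w]) auto
          then show ?thesis unfolding X_visible_def internal_def by auto
        next
          case False
          obtain v where v: "v \<in> VG" "EG g v" "v \<notin> X0"
            using neighbor_outside[OF conn dom X0(1) x(2)] by blast
          let ?w = "[x, (v,h0), y]"
          have w: "walk (VG \<times> VH) ?E ?w" using xV yV x y v h0 \<open>g = g'\<close> fG(3)[OF v(2)]
            by (auto simp: walk_def lex_edges_def nth_Cons split: nat.splits)
          have "\<not> ?E x y" using False x y \<open>g = g'\<close> fG(4) by (simp add: lex_edges_def)
          then have "gdist (VG \<times> VH) ?E x y \<ge> 2"
            using gdist_ge2[OF w] x y hne by auto
          then have "shortest_path (VG \<times> VH) ?E x y ?w"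
            by (intro shortest_of_len[OF w]) auto
          moreover have "internal ?w \<inter> S0 = {}" using v(3) unfolding internal_def S0_def by auto
          ultimately show ?thesis unfolding X_visible_def by blast
        qed
      qed
    qed
  qed
  have cardS0: "card S0 = card VG * (card VH - 1) + card X0"
  proof -
    have "card S0 = card (VG \<times> (VH - {h0})) + card (X0 \<times> {h0})"
      unfolding S0_def using fG(1) fH(1) X0V by (intro card_Un_disjoint) (auto intro: finite_subset)
    then show ?thesis using h0 fH(1) by (simp add: card_cartesian_product)
  qed
  have lower: "card VG * (card VH - 1) + mu_t VG EG \<le> mu_t (VG \<times> VH) ?E"
    using tmv_card_le[OF fP S0tmv] cardS0 X0(2) by simp
  obtain S where S: "total_mutual_visibility_set (VG \<times> VH) ?E S" "card S = mu_t (VG \<times> VH) ?E"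
    using mu_attained[OF fP S0tmv] by blast
  define X where "X = {g\<in>VG. \<forall>h\<in>VH. (g,h) \<in> S}"
  have Xtmv: "total_mutual_visibility_set VG EG X"
    unfolding total_mutual_visibility_set_def
  proof (intro conjI ballI)
    show "X \<subseteq> VG" unfolding X_def by auto
  next
    fix g g' assume g: "g \<in> VG" and g': "g' \<in> VG"
    show "X_visible VG EG X g g'"
    proof (cases "g = g'")
      case True
      have w: "walk VG EG [g]" using g by (simp add: walk_def)
      have "shortest_path VG EG g g' [g]"
        using True by (intro shortest_of_len[OF w]) auto
      then show ?thesis unfolding X_visible_def internal_def by auto
    next
      case False
      obtain h where h: "h \<in> VH" using fH(2) by blast
      obtain p where p: "shortest_path (VG \<times> VH) ?E (g,h) (g',h) p" "internal p \<inter> S = {}"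
        using S(1) g g' h unfolding total_mutual_visibility_set_def X_visible_def by blast
      have pw: "walk (VG \<times> VH) ?E p" "hd p = (g,h)" "last p = (g',h)"
        "length p = Suc (gdist (VG \<times> VH) ?E (g,h) (g',h))"
        using p(1) by (auto simp: shortest_path_def)
      obtain P where P: "walk VG EG P" "hd P = g" "last P = g'"
        using conn g g' unfolding connected_graph_def by blast
      have "gdist (VG \<times> VH) ?E (g,h) (g',h) = gdist VG EG g g'"
        using prod_dist[OF P False h h] .
      then have "shortest_path VG EG (fst (g,h)) (fst (g',h)) (map fst p)"
        using pw by (intro proj_shortest[OF pw(1-3)]) auto
      moreover have "internal (map fst p) \<inter> X = {}"
      proof -
        { fix z assume z: "z \<in> internal p"
          have "set (tl p) \<subseteq> set p" by (cases p) auto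
          then have "z \<in> VG \<times> VH" using pw(1) z unfolding internal_def walk_def
            by (meson in_set_butlastD subsetD)
          then have "fst z \<notin> X" using z p(2) unfolding X_def
            by (metis (no_types, lifting) disjoint_iff mem_Collect_eq mem_Sigma_iff prod.collapse) }
        then show ?thesis unfolding internal_map by blast
      qed
      ultimately show ?thesis unfolding X_visible_def by auto
    qed
  qed
  have cardS: "card S \<le> card VG * (card VH - 1) + card X"
  proof -
    define f where "f g = (g, SOME h. h \<in> VH \<and> (g,h) \<notin> S)" for g
    have fo: "f g \<in> VG \<times> VH - S" if "g \<in> VG - X" for g
    proof -
      have "\<exists>h. h \<in> VH \<and> (g,h) \<notin> S" using that unfolding X_def by auto
      from someI_ex[OF this] show ?thesis using that unfolding f_def by auto
    qed
    have SV: "S \<subseteq> VG \<times> VH" using S(1) by (simp add: total_mutual_visibility_set_def)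
    have sub: "S \<subseteq> VG \<times> VH - f ` (VG - X)" using SV fo by blast
    have inj: "inj_on f (VG - X)" unfolding f_def by (auto intro: inj_onI)
    have XV: "X \<subseteq> VG" unfolding X_def by auto
    have "card S \<le> card (VG \<times> VH - f ` (VG - X))" using sub fP by (intro card_mono) auto
    also have "\<dots> = card VG * card VH - card (VG - X)"
    proof -
      have fs: "f ` (VG - X) \<subseteq> VG \<times> VH" using fo by blast
      have "finite (f ` (VG - X))" using fs fP by (rule finite_subset)
      then show ?thesis using fs by (simp add: card_Diff_subset card_image[OF inj] card_cartesian_product)
    qed
    also have "\<dots> = card VG * card VH - (card VG - card X)"
      using XV fG(1) by (simp add: card_Diff_subset finite_subset)
    also have "\<dots> = card VG * (card VH - 1) + card X"
    proof -
      have "card X \<le> card VG" using XV fG(1) by (simp add: card_mono)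
      moreover have "card VH \<ge> 1" using fH by (simp add: Suc_leI card_gt_0_iff)
      moreover have "card VG * card VH = card VG * (card VH - 1) + card VG"
        using \<open>card VH \<ge> 1\<close> by (cases "card VH") auto
      ultimately show ?thesis by linarith
    qed
    finally show ?thesis .
  qed
  have "card S \<le> card VG * (card VH - 1) + mu_t VG EG"
    using cardS tmv_card_le[OF fG(1) Xtmv] by simp
  then show ?thesis using lower S(2) unfolding lex_vertices_def by simp
qed

end
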